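(* Let $G$ be a graph with $\mathrm{diam}(G)=3$ such that $D_2(G)$ is connected. Then $2\leqslant \mathrm{diam}(D_2(G))\leqslant 5$. Moreover, both inequalities are sharp: there exist graphs $G$ with $\mathrm{diam}(G)=3$, $D_2(G)$ connected and $\mathrm{diam}(D_2(G))=2$, and there exist graphs $G$ with $\mathrm{diam}(G)=3$, $D_2(G)$ connected and $\mathrm{diam}(D_2(G))=5$.
   Context: All graphs are finite, simple and undirected. For a graph $G$, $\mathrm{d}_G(x,y)$ denotes the length of a shortest path between $x$ and $y$, and $\mathrm{diam}(G)$ is the maximum distance between vertices of $G$. The $2$-distance graph $D_2(G)$ of $G$ is the graph with vertex set $V(G)$ in which two vertices $x,y$ are adjacent if and only if $\mathrm{d}_G(x,y)=2$. *)

theory Defs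
  imports Main "HOL-Library.Extended_Nat"
begin

definition simple_graph :: "'a set \<Rightarrow> ('a \<Rightarrow> 'a \<Rightarrow> bool) \<Rightarrow> bool" where
  "simple_graph V E \<longleftrightarrow> finite V \<and> (\<forall>x y. E x y \<longrightarrow> x \<in> V \<and> y \<in> V)
     \<and> (\<forall>x. \<not> E x x) \<and> (\<forall>x y. E x y \<longrightarrow> E y x)"

definition is_walk :: "'a set \<Rightarrow> ('a \<Rightarrow> 'a \<Rightarrow> bool) \<Rightarrow> 'a list \<Rightarrow> 'a \<Rightarrow> 'a \<Rightarrow> bool" where
  "is_walk V E p x y \<longleftrightarrow> p \<noteq> [] \<and> hd p = x \<and> last p = y \<and> set p \<subseteq> V
     \<and> (\<forall>i. Suc i < length p \<longrightarrow> E (p ! i) (p ! Suc i))"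

definition gdist :: "'a set \<Rightarrow> ('a \<Rightarrow> 'a \<Rightarrow> bool) \<Rightarrow> 'a \<Rightarrow> 'a \<Rightarrow> enat" where
  "gdist V E x y = (INF p \<in> {p. is_walk V E p x y}. enat (length p - 1))"

definition gdiam :: "'a set \<Rightarrow> ('a \<Rightarrow> 'a \<Rightarrow> bool) \<Rightarrow> enat" where
  "gdiam V E = (SUP x \<in> V. SUP y \<in> V. gdist V E x y)"

definition gconnected :: "'a set \<Rightarrow> ('a \<Rightarrow> 'a \<Rightarrow> bool) \<Rightarrow> bool" where
  "gconnected V E \<longleftrightarrow> V \<noteq> {} \<and> (\<forall>x\<in>V. \<forall>y\<in>V. gdist V E x y \<noteq> \<infinity>)"

definition D2 :: "'a set \<Rightarrow> ('a \<Rightarrow> 'a \<Rightarrow> bool) \<Rightarrow> ('a \<Rightarrow> 'a \<Rightarrow> bool)" where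
  "D2 V E = (\<lambda>x y. x \<in> V \<and> y \<in> V \<and> gdist V E x y = 2)"

end

theory Submission
  imports Defs
begin


lemma is_walk_single: "is_walk V R [x] a b \<longleftrightarrow> x \<in> V \<and> a = x \<and> b = x"
  unfolding is_walk_def by auto

lemma is_walk_Cons2: "is_walk V R (x # y # p) a b \<longleftrightarrow> a = x \<and> x \<in> V \<and> R x y \<and> is_walk V R (y # p) y b"
proof
  assume H: "is_walk V R (x # y # p) a b"
  have "Suc 0 < length (x # y # p)" by simp
  then have "R ((x # y # p) ! 0) ((x # y # p) ! Suc 0)" using H unfolding is_walk_def by blast
  then have "R x y" by simp
  moreover have "\<forall>i. Suc i < length (y # p) \<longrightarrow> R ((y # p) ! i) ((y # p) ! Suc i)"
  proof (intro allI impI)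
    fix i assume "Suc i < length (y # p)"
    then have "Suc (Suc i) < length (x # y # p)" by simp
    then have "R ((x # y # p) ! Suc i) ((x # y # p) ! Suc (Suc i))" using H unfolding is_walk_def by blast
    then show "R ((y # p) ! i) ((y # p) ! Suc i)" by simp
  qed
  ultimately show "a = x \<and> x \<in> V \<and> R x y \<and> is_walk V R (y # p) y b"
    using H unfolding is_walk_def by auto
next
  assume H: "a = x \<and> x \<in> V \<and> R x y \<and> is_walk V R (y # p) y b"
  have "\<forall>i. Suc i < length (x # y # p) \<longrightarrow> R ((x # y # p) ! i) ((x # y # p) ! Suc i)"
  proof (intro allI impI)
    fix i assume i: "Suc i < length (x # y # p)"
    show "R ((x # y # p) ! i) ((x # y # p) ! Suc i)"
    proof (cases i)
      case 0 then show ?thesis using H by simp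
    next
      case (Suc j)
      then have "Suc j < length (y # p)" using i by simp
      then have "R ((y # p) ! j) ((y # p) ! Suc j)" using H unfolding is_walk_def by blast
      then show ?thesis using Suc by simp
    qed
  qed
  then show "is_walk V R (x # y # p) a b" using H unfolding is_walk_def by auto
qed

lemma walk_le: "is_walk V R p x y \<Longrightarrow> gdist V R x y \<le> enat (length p - 1)"
  unfolding gdist_def by (rule INF_lower2[of p]) auto

lemma gdist_self: "x \<in> V \<Longrightarrow> gdist V R x x = 0"
proof -
  assume "x \<in> V"
  then have "gdist V R x x \<le> enat (length [x] - 1)" by (intro walk_le) (simp add: is_walk_single)
  then show ?thesis by (simp add: zero_enat_def[symmetric])
qed

lemma gdist_edge: "x \<in> V \<Longrightarrow> y \<in> V \<Longrightarrow> R x y \<Longrightarrow> gdist V R x y \<le> 1"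
proof -
  assume "x \<in> V" "y \<in> V" "R x y"
  then have "gdist V R x y \<le> enat (length [x,y] - 1)" by (intro walk_le) (simp add: is_walk_Cons2 is_walk_single)
  then show ?thesis by (simp add: one_enat_def)
qed

lemma gdist_attained:
  assumes "gdist V R x y = enat n"
  shows "\<exists>p. is_walk V R p x y \<and> length p = Suc n"
proof -
  let ?S = "(\<lambda>p. enat (length p - 1)) ` {p. is_walk V R p x y}"
  have g: "gdist V R x y = Inf ?S" unfolding gdist_def by simp
  have ne: "?S \<noteq> {}"
  proof
    assume "?S = {}"
    then have "gdist V R x y = \<infinity>" using g by (simp add: top_enat_def)
    then show False using assms by simp
  qed
  then obtain e where e: "e \<in> ?S" by blast
  have "Inf ?S = (LEAST z. z \<in> ?S)" by (simp only: Inf_enat_def if_not_P[OF ne])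
  also have "... \<in> ?S" by (rule LeastI[of "\<lambda>z. z \<in> ?S", OF e])
  finally have "Inf ?S \<in> ?S" .
  then obtain p where p: "is_walk V R p x y" "enat (length p - 1) = enat n" using assms g by auto
  then have "p \<noteq> []" unfolding is_walk_def by auto
  then show ?thesis using p by (intro exI[of _ p]) auto
qed

lemma walk_append: "is_walk V R p x y \<Longrightarrow> is_walk V R q y z \<Longrightarrow> is_walk V R (p @ tl q) x z"
proof (induction p arbitrary: x)
  case Nil then show ?case by (simp add: is_walk_def)
next
  case (Cons a p)
  show ?case
  proof (cases p)
    case Nil
    then have "a = x" "a = y" using Cons.prems by (auto simp: is_walk_single)
    moreover have "q \<noteq> []" "hd q = y" using Cons.prems unfolding is_walk_def by auto
    ultimately have "(a # p) @ tl q = q" using Nil by (metis append_Cons append_Nil list.collapse)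
    then show ?thesis using Cons.prems \<open>a = x\<close> \<open>a = y\<close> by simp
  next
    case (Cons b p')
    then have h: "a = x" "a \<in> V" "R a b" "is_walk V R (b # p') b y" using Cons.prems(1) by (auto simp: is_walk_Cons2)
    have "is_walk V R (p @ tl q) b z" using Cons.IH[of b] h Cons.prems(2) \<open>p = b # p'\<close> by simp
    then show ?thesis using h \<open>p = b # p'\<close> by (simp add: is_walk_Cons2)
  qed
qed

lemma gdist_tri: "gdist V R x z \<le> gdist V R x y + gdist V R y z"
proof (cases "gdist V R x y = \<infinity> \<or> gdist V R y z = \<infinity>")
  case True then show ?thesis by auto
next
  case False
  then obtain m n where mn: "gdist V R x y = enat m" "gdist V R y z = enat n" by auto
  obtain p where p: "is_walk V R p x y" "length p = Suc m" using gdist_attained[OF mn(1)] by blast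
  obtain q where q: "is_walk V R q y z" "length q = Suc n" using gdist_attained[OF mn(2)] by blast
  have "is_walk V R (p @ tl q) x z" by (rule walk_append[OF p(1) q(1)])
  then have "gdist V R x z \<le> enat (length (p @ tl q) - 1)" by (rule walk_le)
  also have "length (p @ tl q) - 1 = m + n" using p q by simp
  finally show ?thesis using mn by simp
qed

lemma walk_take:
  assumes w: "is_walk V R p x y" and k: "k < length p"
  shows "is_walk V R (take (Suc k) p) x (p ! k)"
proof -
  have ne: "p \<noteq> []" "hd p = x" "set p \<subseteq> V" and st: "\<forall>i. Suc i < length p \<longrightarrow> R (p ! i) (p ! Suc i)"
    using w unfolding is_walk_def by auto
  have l: "length (take (Suc k) p) = Suc k" using k by simp
  have "take (Suc k) p \<noteq> []" using l by auto
  moreover have "hd (take (Suc k) p) = x" using ne by simp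
  moreover have "last (take (Suc k) p) = p ! k"
    using k by (simp add: take_Suc_conv_app_nth)
  moreover have "set (take (Suc k) p) \<subseteq> V" using ne(3) set_take_subset by fastforce
  moreover have "\<forall>i. Suc i < length (take (Suc k) p) \<longrightarrow> R (take (Suc k) p ! i) (take (Suc k) p ! Suc i)"
    using st l k by simp
  ultimately show ?thesis unfolding is_walk_def by blast
qed

lemma walk_drop:
  assumes w: "is_walk V R p x y" and k: "k < length p"
  shows "is_walk V R (drop k p) (p ! k) y"
proof -
  have ne: "p \<noteq> []" "last p = y" "set p \<subseteq> V" and st: "\<forall>i. Suc i < length p \<longrightarrow> R (p ! i) (p ! Suc i)"
    using w unfolding is_walk_def by auto
  have "drop k p \<noteq> []" using k by simp
  moreover have "hd (drop k p) = p ! k" using k by (simp add: hd_drop_conv_nth)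
  moreover have "last (drop k p) = y" using k ne by simp
  moreover have "set (drop k p) \<subseteq> V" using ne(3) set_drop_subset by fastforce
  moreover have "\<forall>i. Suc i < length (drop k p) \<longrightarrow> R (drop k p ! i) (drop k p ! Suc i)"
  proof (intro allI impI)
    fix i assume "Suc i < length (drop k p)"
    then have "Suc (k + i) < length p" by simp
    then have "R (p ! (k + i)) (p ! Suc (k + i))" using st by blast
    then show "R (drop k p ! i) (drop k p ! Suc i)" using k by simp
  qed
  ultimately show ?thesis unfolding is_walk_def by blast
qed

lemma gdist_split:
  assumes "gdist V R x y = enat n" "k \<le> n"
  shows "\<exists>w\<in>V. gdist V R x w \<le> enat k \<and> gdist V R w y \<le> enat (n - k)"
proof -
  obtain p where p: "is_walk V R p x y" "length p = Suc n" using gdist_attained[OF assms(1)] by blast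
  have k: "k < length p" using p assms by simp
  have "p ! k \<in> V" using p(1) k unfolding is_walk_def by auto
  moreover have "gdist V R x (p ! k) \<le> enat k"
    using walk_le[OF walk_take[OF p(1) k]] k by simp
  moreover have "gdist V R (p ! k) y \<le> enat (n - k)"
    using walk_le[OF walk_drop[OF p(1) k]] p by simp
  ultimately show ?thesis by blast
qed



locale dsp =
  fixes V :: "'a set" and E :: "'a \<Rightarrow> 'a \<Rightarrow> bool" and d :: "'a \<Rightarrow> 'a \<Rightarrow> nat"
  assumes d0: "x \<in> V \<Longrightarrow> d x x = 0"
    and d0': "x \<in> V \<Longrightarrow> y \<in> V \<Longrightarrow> d x y = 0 \<Longrightarrow> x = y"
    and d1: "x \<in> V \<Longrightarrow> y \<in> V \<Longrightarrow> d x y = 1 \<longleftrightarrow> E x y"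
    and dsym: "x \<in> V \<Longrightarrow> y \<in> V \<Longrightarrow> d x y = d y x"
    and dtri: "x \<in> V \<Longrightarrow> y \<in> V \<Longrightarrow> z \<in> V \<Longrightarrow> d x z \<le> d x y + d y z"
    and dgeo: "x \<in> V \<Longrightarrow> y \<in> V \<Longrightarrow> d x y = Suc k \<Longrightarrow> \<exists>z\<in>V. E x z \<and> d z y = k"
    and d3: "x \<in> V \<Longrightarrow> y \<in> V \<Longrightarrow> d x y \<le> 3"
    and diam3: "\<exists>p\<in>V. \<exists>q\<in>V. d p q = 3"
begin

lemma geo1: "x \<in> V \<Longrightarrow> y \<in> V \<Longrightarrow> d x y = Suc k \<Longrightarrow> \<exists>z\<in>V. d x z = 1 \<and> d z y = k"
  using dgeo d1 by blast

lemma AL: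
  assumes V: "x \<in> V" "y \<in> V" "w \<in> V" and xy: "d x y = 1"
    and nc: "\<forall>z\<in>V. \<not> (d x z = 2 \<and> d y z = 2)"
    and wx: "w \<noteq> x" "d w x \<noteq> 2" and wy: "w \<noteq> y" "d w y \<noteq> 2"
    and nt: "\<forall>t\<in>V. d w t = 2 \<longrightarrow> d t x \<noteq> 2 \<and> d t y \<noteq> 2"
  shows False
proof -
  have yx: "d y x = 1" using xy dsym V by simp
  have wx13: "d w x = 1 \<or> d w x = 3" using d3[of w x] d0'[of w x] wx V by force
  have wy13: "d w y = 1 \<or> d w y = 3" using d3[of w y] d0'[of w y] wy V by force
  have t1: "d w x \<le> d w y + 1" using dtri[of w y x] V yx by simp
  have t2: "d w y \<le> d w x + 1" using dtri[of w x y] V xy by simp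
  have case3: False if h: "d w x = 3" "d w y = 3"
  proof -
    obtain s where s: "s \<in> V" "d w s = 1" "d s x = 2" using geo1[of w x 2] h V by auto
    obtain t where t: "t \<in> V" "d s t = 1" "d t x = 1" using geo1[of s x 1] s V by auto
    have "d w t \<le> 2" using dtri[of w s t] s t V by simp
    moreover have "d w x \<le> d w t + d t x" using dtri[of w t x] t V by simp
    ultimately have wt: "d w t = 2" using h t by simp
    have "d t y \<noteq> 2" using nt wt t by blast
    moreover have "d t y \<le> 2" using dtri[of t x y] t V xy by simp
    moreover have "t \<noteq> y" using wt h by auto
    moreover have "d t y \<noteq> 0" using d0'[of t y] t V \<open>t \<noteq> y\<close> by auto
    ultimately have ty: "d t y = 1" by linarith
    have "d s y \<le> 2" using dtri[of s t y] s t ty V by simp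
    moreover have "d w y \<le> d w s + d s y" using dtri[of w s y] s V by simp
    ultimately have "d s y = 2" using h s by simp
    then show False using nc s V dsym by metis
  qed
  have case1: False if h: "d w x = 1" "d w y = 1"
  proof -
    have C1: "d t x = 1 \<and> d t y = 1" if t: "t \<in> V" "d w t = 2" for t
    proof -
      have a: "d t x \<noteq> 2" "d t y \<noteq> 2" using nt t by auto
      have b: "d t x \<le> 3" "d t y \<le> 3" using d3 t V by auto
      have c: "t \<noteq> x" "t \<noteq> y" using t h by auto
      have e: "d t x \<noteq> 0" "d t y \<noteq> 0" using c d0' t V by auto
      have f: "d t x \<le> d t y + 1" using dtri[of t y x] t V yx by simp
      have g: "d t y \<le> d t x + 1" using dtri[of t x y] t V xy by simp
      have no3: False if "d t x = 3" "d t y = 3"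
      proof -
        obtain s where s: "s \<in> V" "d w s = 1" "d s t = 1" using geo1[of w t 1] t V by auto
        have "d s x \<le> 2" using dtri[of s w x] s h V dsym by simp
        moreover have "d t x \<le> d t s + d s x" using dtri[of t s x] s t V by simp
        moreover have "d t s = 1" using s t V dsym by simp
        ultimately have sx: "d s x = 2" using that by simp
        have "d s y \<le> 2" using dtri[of s w y] s h V dsym by simp
        moreover have "d t y \<le> d t s + d s y" using dtri[of t s y] s t V by simp
        ultimately have sy: "d s y = 2" using that \<open>d t s = 1\<close> by simp
        show False using nc s sx sy V dsym by metis
      qed
      show ?thesis using a b e f g no3 by presburger
    qed
    have C2: "d w z \<le> 2" if z: "z \<in> V" for z
    proof (rule ccontr)
      assume "\<not> d w z \<le> 2"
      then have wz: "d w z = 3" using d3 z V by force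
      obtain s where s: "s \<in> V" "d w s = 1" "d s z = 2" using geo1[of w z 2] wz z V by auto
      obtain t where t: "t \<in> V" "d s t = 1" "d t z = 1" using geo1[of s z 1] s z by auto
      have "d w t \<le> 2" using dtri[of w s t] s t V by simp
      moreover have "d w z \<le> d w t + d t z" using dtri[of w t z] t z V by simp
      ultimately have wt: "d w t = 2" using wz t by simp
      have tx: "d t x = 1" "d t y = 1" using C1 t wt by auto
      have "d x z \<le> 2" using dtri[of x t z] t z V tx dsym by simp
      moreover have "d w z \<le> d w x + d x z" using dtri[of w x z] z V by simp
      ultimately have xz: "d x z = 2" using wz h by simp
      have "d y z \<le> 2" using dtri[of y t z] t z V tx dsym by simp
      moreover have "d w z \<le> d w y + d y z" using dtri[of w y z] z V by simp
      ultimately have yz: "d y z = 2" using wz h by simp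
      show False using nc z xz yz by blast
    qed
    obtain p q where pq: "p \<in> V" "q \<in> V" "d p q = 3" using diam3 by blast
    have C3: False if p: "p \<in> V" "q \<in> V" "d p q = 3" "d w p \<le> 1" "d w q = 2" for p q
    proof -
      have qx: "d q x = 1" "d q y = 1" using C1 p by auto
      have "p \<noteq> w" using p by auto
      then have wp: "d w p = 1" using p d0'[of w p] V by (cases "d w p") auto
      have "d x p \<le> 2" using dtri[of x w p] p V h dsym wp by simp
      moreover have "d x p \<noteq> 1"
      proof
        assume "d x p = 1"
        then have "d q p \<le> 2" using dtri[of q x p] p V qx by simp
        then show False using p dsym by simp
      qed
      moreover have "x \<noteq> p"
      proof
        assume "x = p"
        then have "d q p = 1" using qx by simp
        then show False using p dsym by simp
      qed
      then have "d x p \<noteq> 0" using d0'[of x p] p V by auto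
      ultimately have xp: "d x p = 2" by simp
      have "d y p \<le> 2" using dtri[of y w p] p V h dsym wp by simp
      moreover have "d q p \<le> d q y + d y p" using dtri[of q y p] p V by simp
      moreover have "d q p = 3" using p dsym by simp
      ultimately have yp: "d y p = 2" using qx by simp
      show False using nc p xp yp by blast
    qed
    have wp: "d w p \<le> 2" "d w q \<le> 2" using C2 pq by auto
    show False
    proof (cases "d w p = 2")
      case True
      show False
      proof (cases "d w q = 2")
        case True
        have "d p x = 1" "d q x = 1" using C1 pq \<open>d w p = 2\<close> True by auto
        then have "d p q \<le> 2" using dtri[of p x q] pq V dsym by simp
        then show False using pq by simp
      next
        case False
        then show False using C3[of q p] pq \<open>d w p = 2\<close> wp dsym by simp
      qed
    next
      case False
      show False
      proof (cases "d w q = 2")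
        case True
        then show False using C3[of p q] pq False wp by simp
      next
        case F2: False
        have "d w p \<le> 1" "d w q \<le> 1" using False F2 wp by auto
        then have "d p q \<le> 2" using dtri[of p w q] pq V dsym by simp
        then show False using pq by simp
      qed
    qed
  qed
  show False using wx13 wy13 t1 t2 case1 case3 by auto
qed

lemma d13: "a \<in> V \<Longrightarrow> b \<in> V \<Longrightarrow> a \<noteq> b \<Longrightarrow> d a b \<noteq> 2 \<Longrightarrow> d a b \<noteq> 1 \<Longrightarrow> d a b = 3"
  using d3[of a b] d0'[of a b] by force

lemma nc_flip:
  assumes "a \<in> V" "b \<in> V" "\<forall>z\<in>V. \<not> (d a z = 2 \<and> d z b = 2)"
  shows "\<forall>z\<in>V. \<not> (d a z = 2 \<and> d b z = 2)"
proof (intro ballI)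
  fix z assume z: "z \<in> V"
  have "d b z = d z b" using dsym[of b z] z assms by simp
  then show "\<not> (d a z = 2 \<and> d b z = 2)" using assms z by auto
qed

lemma nt_two:
  assumes "a \<in> V" "b \<in> V" "c \<in> V"
    and "\<forall>z\<in>V. \<not> (d a z = 2 \<and> d z c = 2)" and "\<forall>z\<in>V. \<not> (d b z = 2 \<and> d z c = 2)"
  shows "\<forall>t\<in>V. d c t = 2 \<longrightarrow> d t a \<noteq> 2 \<and> d t b \<noteq> 2"
proof (intro ballI impI)
  fix t assume t: "t \<in> V" "d c t = 2"
  have "d t c = 2" using dsym[of t c] t assms by simp
  moreover have "d t a = d a t" "d t b = d b t" using dsym t assms by auto
  ultimately show "d t a \<noteq> 2 \<and> d t b \<noteq> 2" using assms t by auto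
qed

lemma MAIN:
  assumes V: "y0 \<in> V" "y3 \<in> V" "y6 \<in> V"
    and a03: "y0 \<noteq> y3" "d y0 y3 \<noteq> 2" "\<forall>z\<in>V. \<not> (d y0 z = 2 \<and> d z y3 = 2)"
    and a36: "y3 \<noteq> y6" "d y3 y6 \<noteq> 2" "\<forall>z\<in>V. \<not> (d y3 z = 2 \<and> d z y6 = 2)"
    and a06: "y0 \<noteq> y6" "d y0 y6 \<noteq> 2" "\<forall>z\<in>V. \<not> (d y0 z = 2 \<and> d z y6 = 2)"
      "\<forall>z1\<in>V. \<forall>z2\<in>V. \<not> (d y0 z1 = 2 \<and> d z1 z2 = 2 \<and> d z2 y6 = 2)"
  shows False
proof -
  have s03: "d y3 y0 = d y0 y3" and s36: "d y6 y3 = d y3 y6" and s06: "d y6 y0 = d y0 y6"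
    using dsym V by auto
  have a30: "\<forall>z\<in>V. \<not> (d y3 z = 2 \<and> d z y0 = 2)"
  proof (intro ballI)
    fix z assume z: "z \<in> V"
    have "d y3 z = d z y3" "d z y0 = d y0 z" using dsym z V by auto
    then show "\<not> (d y3 z = 2 \<and> d z y0 = 2)" using a03 z by auto
  qed
  have a63: "\<forall>z\<in>V. \<not> (d y6 z = 2 \<and> d z y3 = 2)"
  proof (intro ballI)
    fix z assume z: "z \<in> V"
    have "d y6 z = d z y6" "d z y3 = d y3 z" using dsym z V by auto
    then show "\<not> (d y6 z = 2 \<and> d z y3 = 2)" using a36 z by auto
  qed
  have a60: "\<forall>z\<in>V. \<not> (d y6 z = 2 \<and> d z y0 = 2)"
  proof (intro ballI)
    fix z assume z: "z \<in> V"
    have "d y6 z = d z y6" "d z y0 = d y0 z" using dsym z V by auto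
    then show "\<not> (d y6 z = 2 \<and> d z y0 = 2)" using a06 z by auto
  qed
  have n30: "d y3 y0 \<noteq> 2" and n63: "d y6 y3 \<noteq> 2" and n60: "d y6 y0 \<noteq> 2"
    using s03 s36 s06 a03(2) a36(2) a06(2) by auto
  have e03: "d y0 y3 = 3"
  proof -
    have "d y0 y3 \<noteq> 1"
    proof
      assume h: "d y0 y3 = 1"
      have n1: "\<forall>z\<in>V. \<not> (d y0 z = 2 \<and> d y3 z = 2)" using nc_flip[OF V(1) V(2) a03(3)] .
      have n2: "\<forall>t\<in>V. d y6 t = 2 \<longrightarrow> d t y0 \<noteq> 2 \<and> d t y3 \<noteq> 2"
        using nt_two[OF V(1) V(2) V(3) a06(3) a36(3)] .
      show False using AL[OF V(1) V(2) V(3) h n1 a06(1)[symmetric] n60 a36(1)[symmetric] n63 n2] .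
    qed
    then show ?thesis using d13[OF V(1) V(2) a03(1) a03(2)] by blast
  qed
  have e36: "d y3 y6 = 3"
  proof -
    have "d y3 y6 \<noteq> 1"
    proof
      assume h: "d y3 y6 = 1"
      have n1: "\<forall>z\<in>V. \<not> (d y3 z = 2 \<and> d y6 z = 2)" using nc_flip[OF V(2) V(3) a36(3)] .
      have n2: "\<forall>t\<in>V. d y0 t = 2 \<longrightarrow> d t y3 \<noteq> 2 \<and> d t y6 \<noteq> 2"
        using nt_two[OF V(2) V(3) V(1) a30 a60] .
      show False using AL[OF V(2) V(3) V(1) h n1 a03(1) a03(2) a06(1) a06(2) n2] .
    qed
    then show ?thesis using d13[OF V(2) V(3) a36(1) a36(2)] by blast
  qed
  have e06: "d y0 y6 = 3"
  proof -
    have "d y0 y6 \<noteq> 1"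
    proof
      assume h: "d y0 y6 = 1"
      have n1: "\<forall>z\<in>V. \<not> (d y0 z = 2 \<and> d y6 z = 2)" using nc_flip[OF V(1) V(3) a06(3)] .
      have n2: "\<forall>t\<in>V. d y3 t = 2 \<longrightarrow> d t y0 \<noteq> 2 \<and> d t y6 \<noteq> 2"
        using nt_two[OF V(1) V(3) V(2) a03(3) a63] .
      show False using AL[OF V(1) V(3) V(2) h n1 a03(1)[symmetric] n30 a36(1) a36(2) n2] .
    qed
    then show ?thesis using d13[OF V(1) V(3) a06(1) a06(2)] by blast
  qed
  obtain a where a: "a \<in> V" "d y0 a = 1" "d a y3 = 2" using geo1[of y0 y3 2] e03 V by auto
  obtain b where b: "b \<in> V" "d a b = 1" "d b y3 = 1" using geo1[of a y3 1] a V by auto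
  have "d y0 b \<le> 2" using dtri[of y0 a b] a b V by simp
  moreover have "d y0 y3 \<le> d y0 b + d b y3" using dtri[of y0 b y3] b V by simp
  ultimately have y0b: "d y0 b = 2" using e03 b by simp
  have y6a: "d y6 a = 3"
  proof (rule d13)
    show "y6 \<noteq> a" using a e06 by auto
    have "d y6 a = d a y6" "d y3 a = d a y3" using dsym a V by auto
    then show "d y6 a \<noteq> 2" using a36(3) a by auto
    show "d y6 a \<noteq> 1"
    proof
      assume "d y6 a = 1"
      then have "d a y6 = 1" using dsym a V by auto
      then have "d y0 y6 \<le> 2" using dtri[of y0 a y6] a V by simp
      then show False using e06 by simp
    qed
  qed (use V a in auto)
  obtain h where h: "h \<in> V" "d y6 h = 1" "d h a = 2" using geo1[of y6 a 2] y6a a V by auto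
  obtain k where k: "k \<in> V" "d h k = 1" "d k a = 1" using geo1[of h a 1] h a by auto
  have "d y6 k \<le> 2" using dtri[of y6 h k] h k V by simp
  moreover have "d y6 a \<le> d y6 k + d k a" using dtri[of y6 k a] k a V by simp
  ultimately have y6k: "d y6 k = 2" using y6a k by simp
  have ky6: "d k y6 = 2" using y6k dsym k V by auto
  have ky0: "d k y0 = 1"
  proof -
    have "d a y0 = 1" using dsym a V by auto
    then have "d k y0 \<le> 2" using dtri[of k a y0] k a V by simp
    moreover have "k \<noteq> y0" using y6k e06 s06 by auto
    moreover have "d k y0 \<noteq> 2"
    proof
      assume "d k y0 = 2"
      then have "d y0 k = 2" using dsym k V by auto
      then show False using a06(3) k ky6 by auto
    qed
    ultimately show ?thesis using d0'[of k y0] k V by fastforce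
  qed
  have ky3: "d k y3 = 3"
  proof (rule d13)
    have "d y3 k = d k y3" using dsym k V by auto
    then show "d k y3 \<noteq> 2" using a36(3) k ky6 by auto
    show "k \<noteq> y3" using y6k e36 s36 by auto
    have "d y0 k = 1" using ky0 dsym k V by auto
    moreover have "d y0 y3 \<le> d y0 k + d k y3" using dtri[of y0 k y3] k V by simp
    ultimately show "d k y3 \<noteq> 1" using e03 by auto
  qed (use k V in auto)
  have "d b a = 1" "d a k = 1" using dsym a b k by auto
  then have "d b k \<le> 2" using dtri[of b a k] a b k by simp
  moreover have "d k y3 \<le> d k b + d b y3" using dtri[of k b y3] b k V by simp
  moreover have "d k b = d b k" using dsym b k by simp
  ultimately have bk: "d b k = 2" using ky3 b by simp
  show False using a06(4) b k y0b bk ky6 by blast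
qed

end


lemma gdist_zero_eq: "gdist V R x y = enat 0 \<Longrightarrow> x = y"
proof -
  assume h: "gdist V R x y = enat 0"
  obtain p where p: "is_walk V R p x y" "length p = Suc 0" using gdist_attained[OF h] by blast
  then obtain a where "p = [a]" by (metis Suc_length_conv length_0_conv)
  then show "x = y" using p by (simp add: is_walk_single)
qed

lemma gdist_one_edge: "gdist V R x y = enat 1 \<Longrightarrow> R x y"
proof -
  assume h: "gdist V R x y = enat 1"
  obtain p where p: "is_walk V R p x y" "length p = Suc (Suc 0)" using gdist_attained[OF h] by auto
  then obtain a b where "p = [a, b]" by (metis Suc_length_conv length_0_conv)
  then show "R x y" using p by (simp add: is_walk_Cons2 is_walk_single)
qed

lemma walk_rev:
  assumes w: "is_walk V R p x y" and sym: "\<And>u v. R u v \<Longrightarrow> R v u"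
  shows "is_walk V R (rev p) y x"
proof -
  have ne: "p \<noteq> []" "hd p = x" "last p = y" "set p \<subseteq> V" and st: "\<forall>i. Suc i < length p \<longrightarrow> R (p ! i) (p ! Suc i)"
    using w unfolding is_walk_def by auto
  have "\<forall>i. Suc i < length (rev p) \<longrightarrow> R (rev p ! i) (rev p ! Suc i)"
  proof (intro allI impI)
    fix i assume i: "Suc i < length (rev p)"
    define j where "j = length p - Suc (Suc i)"
    have j1: "Suc j < length p" using i j_def by simp
    have e1: "rev p ! i = p ! Suc j" using i j_def by (simp add: rev_nth Suc_diff_Suc)
    have e2: "rev p ! Suc i = p ! j" using i j_def by (simp add: rev_nth)
    show "R (rev p ! i) (rev p ! Suc i)" using st j1 e1 e2 sym by metis
  qed
  moreover have "hd (rev p) = y" using ne by (simp add: hd_rev)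
  moreover have "last (rev p) = x" using ne by (simp add: last_rev)
  ultimately show ?thesis using ne unfolding is_walk_def by simp
qed

lemma gdist_sym_le:
  assumes sym: "\<And>u v. R u v \<Longrightarrow> R v u"
  shows "gdist V R y x \<le> gdist V R x y"
proof (cases "gdist V R x y")
  case (enat n)
  obtain p where p: "is_walk V R p x y" "length p = Suc n" using gdist_attained[OF enat] by blast
  have "gdist V R y x \<le> enat (length (rev p) - 1)" using walk_rev[OF p(1) sym] by (rule walk_le)
  then show ?thesis using p enat by simp
next
  case infinity then show ?thesis by simp
qed

lemma gdist_sym:
  assumes sym: "\<And>u v. R u v \<Longrightarrow> R v u"
  shows "gdist V R y x = gdist V R x y"
  using gdist_sym_le[of R V x y] gdist_sym_le[of R V y x] sym by (blast intro: antisym)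

lemma gdiam_upper: "x \<in> V \<Longrightarrow> y \<in> V \<Longrightarrow> gdist V R x y \<le> gdiam V R"
  unfolding gdiam_def by (meson SUP_upper2 SUP_upper)

lemma gdiam3_ex:
  assumes "gdiam V R = 3"
  shows "\<exists>p\<in>V. \<exists>q\<in>V. gdist V R p q = 3"
proof (rule ccontr)
  assume "\<not> ?thesis"
  then have "\<forall>p\<in>V. \<forall>q\<in>V. gdist V R p q \<le> 2"
  proof (intro ballI)
    fix p q assume pq: "p \<in> V" "q \<in> V" and n: "\<not> (\<exists>p\<in>V. \<exists>q\<in>V. gdist V R p q = 3)"
    have "gdist V R p q \<le> 3" using gdiam_upper[OF pq, of R] assms by simp
    moreover have "gdist V R p q \<noteq> 3" using n pq by blast
    ultimately show "gdist V R p q \<le> 2"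
      by (cases "gdist V R p q") (auto simp: numeral_eq_enat)
  qed
  then have "gdiam V R \<le> 2" unfolding gdiam_def by (intro SUP_least) auto
  then show False using assms by simp
qed

lemma dsp_inst:
  assumes S: "simple_graph V E" and G: "gdiam V E = 3"
  shows "dsp V E (\<lambda>x y. the_enat (gdist V E x y))"
proof -
  define d where "d = (\<lambda>x y. the_enat (gdist V E x y))"
  have sym: "\<And>u v. E u v \<Longrightarrow> E v u" and irr: "\<And>u. \<not> E u u" and inV: "\<And>u v. E u v \<Longrightarrow> u \<in> V \<and> v \<in> V"
    using S unfolding simple_graph_def by auto
  have le3: "gdist V E x y \<le> 3" if "x \<in> V" "y \<in> V" for x y using gdiam_upper[OF that, of E] G by simp
  have fin: "gdist V E x y = enat (d x y)" if "x \<in> V" "y \<in> V" for x y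
  proof -
    have "gdist V E x y \<le> enat 3" using le3[OF that] by (simp add: numeral_eq_enat)
    then obtain k where "gdist V E x y = enat k" using enat_ile by blast
    then show ?thesis unfolding d_def by simp
  qed
  have d0: "d x x = 0" if "x \<in> V" for x using fin[OF that that] gdist_self[OF that, of E] by (simp add: zero_enat_def)
  have d0': "x = y" if "x \<in> V" "y \<in> V" "d x y = 0" for x y
    using fin[OF that(1,2)] that(3) gdist_zero_eq by metis
  have d1: "d x y = 1 \<longleftrightarrow> E x y" if xy: "x \<in> V" "y \<in> V" for x y
  proof
    assume "d x y = 1" then show "E x y" using fin[OF xy] gdist_one_edge by metis
  next
    assume e: "E x y"
    have "gdist V E x y \<le> 1" using gdist_edge[where R=E, OF xy e] .
    then have "d x y \<le> 1" using fin[OF xy] by (simp add: one_enat_def)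
    moreover have "d x y \<noteq> 0" using d0'[OF xy] e irr by blast
    ultimately show "d x y = 1" by simp
  qed
  have dsym: "d x y = d y x" if "x \<in> V" "y \<in> V" for x y
    unfolding d_def using gdist_sym[of E V x y] sym by simp
  have dtri: "d x z \<le> d x y + d y z" if "x \<in> V" "y \<in> V" "z \<in> V" for x y z
  proof -
    have "gdist V E x z \<le> gdist V E x y + gdist V E y z" by (rule gdist_tri)
    then show ?thesis using fin that by simp
  qed
  have dgeo: "\<exists>z\<in>V. E x z \<and> d z y = k" if xy: "x \<in> V" "y \<in> V" and k: "d x y = Suc k" for x y k
  proof -
    have gk: "gdist V E x y = enat (Suc k)" using fin[OF xy] k by simp
    obtain p where p: "is_walk V E p x y" "length p = Suc (Suc k)" using gdist_attained[OF gk] by blast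
    have ph: "p ! 0 = x" using p unfolding is_walk_def by (auto simp: hd_conv_nth)
    have "R0": "E (p ! 0) (p ! Suc 0)" using p unfolding is_walk_def by auto
    then have exz: "E x (p ! 1)" using ph by simp
    have zV: "p ! 1 \<in> V" using inV exz by blast
    have "gdist V E (p ! 1) y \<le> enat (length (drop 1 p) - 1)" using walk_le[OF walk_drop[OF p(1), of 1]] p by simp
    then have up: "d (p ! 1) y \<le> k" using fin[OF zV xy(2)] p by simp
    have "d x y \<le> d x (p ! 1) + d (p ! 1) y" using dtri[OF xy(1) zV xy(2)] .
    moreover have "d x (p ! 1) = 1" using d1[OF xy(1) zV] exz by simp
    ultimately have "d (p ! 1) y = k" using up k by simp
    then show ?thesis using zV exz by blast
  qed
  have d3: "d x y \<le> 3" if "x \<in> V" "y \<in> V" for x y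
    using le3[OF that] fin[OF that] by (simp add: numeral_eq_enat)
  have diam3: "\<exists>p\<in>V. \<exists>q\<in>V. d p q = 3"
    using gdiam3_ex[OF G] fin by (metis numeral_eq_enat enat.inject)
  show ?thesis unfolding d_def[symmetric]
    by (unfold_locales) (use d0 d0' d1 dsym dtri dgeo d3 diam3 in auto)
qed



lemma D2_inV: "D2 V E u v \<Longrightarrow> u \<in> V \<and> v \<in> V" unfolding D2_def by auto

lemma gd_path2: "R a z \<Longrightarrow> R z b \<Longrightarrow> a \<in> V \<Longrightarrow> z \<in> V \<Longrightarrow> b \<in> V \<Longrightarrow> gdist V R a b \<le> 2"
proof -
  assume h: "R a z" "R z b" "a \<in> V" "z \<in> V" "b \<in> V"
  have "gdist V R a b \<le> gdist V R a z + gdist V R z b" by (rule gdist_tri)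
  also have "\<dots> \<le> 1 + 1" using gdist_edge[where R=R, OF h(3) h(4) h(1)] gdist_edge[where R=R, OF h(4) h(5) h(2)] by (rule add_mono)
  finally show ?thesis by simp
qed

lemma gd_path3: "R a z1 \<Longrightarrow> R z1 z2 \<Longrightarrow> R z2 b \<Longrightarrow> a \<in> V \<Longrightarrow> z1 \<in> V \<Longrightarrow> z2 \<in> V \<Longrightarrow> b \<in> V \<Longrightarrow> gdist V R a b \<le> 3"
proof -
  assume h: "R a z1" "R z1 z2" "R z2 b" "a \<in> V" "z1 \<in> V" "z2 \<in> V" "b \<in> V"
  have "gdist V R a b \<le> gdist V R a z2 + gdist V R z2 b" by (rule gdist_tri)
  also have "\<dots> \<le> 2 + 1" using gd_path2[OF h(1) h(2) h(4) h(5) h(6)] gdist_edge[where R=R, OF h(6) h(7) h(3)] by (rule add_mono)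
  finally show ?thesis by simp
qed

lemma enat_contra: "(a::enat) \<le> enat m \<Longrightarrow> enat n \<le> a \<Longrightarrow> m < n \<Longrightarrow> False"
  using order_trans[of "enat n" a "enat m"] by simp

theorem part1:
  assumes S: "simple_graph V E" and G: "gdiam V E = 3" and C: "gconnected V (D2 V E)"
  shows "2 \<le> gdiam V (D2 V E) \<and> gdiam V (D2 V E) \<le> 5"
proof -
  define d where "d = (\<lambda>x y. the_enat (gdist V E x y))"
  interpret dsp V E d unfolding d_def using dsp_inst[OF S G] .
  let ?R = "D2 V E"
  have le3: "gdist V E x y \<le> 3" if "x \<in> V" "y \<in> V" for x y using gdiam_upper[OF that, of E] G by simp
  have fin: "gdist V E x y = enat (d x y)" if "x \<in> V" "y \<in> V" for x y
  proof -
    have "gdist V E x y \<le> enat 3" using le3[OF that] by (simp add: numeral_eq_enat)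
    then obtain k where "gdist V E x y = enat k" using enat_ile by blast
    then show ?thesis unfolding d_def by simp
  qed
  have Rd: "?R x y \<longleftrightarrow> x \<in> V \<and> y \<in> V \<and> d x y = 2" for x y
  proof
    assume "?R x y"
    then show "x \<in> V \<and> y \<in> V \<and> d x y = 2" using fin unfolding D2_def by (auto simp: numeral_eq_enat)
  next
    assume "x \<in> V \<and> y \<in> V \<and> d x y = 2"
    then show "?R x y" using fin unfolding D2_def by (auto simp: numeral_eq_enat)
  qed
  obtain p q where pq: "p \<in> V" "q \<in> V" "d p q = 3" using diam3 by blast
  have "2 \<le> gdist V ?R p q"
  proof (rule ccontr)
    assume "\<not> 2 \<le> gdist V ?R p q"
    then have lt: "gdist V ?R p q < 2" by simp
    then obtain n where n: "gdist V ?R p q = enat n" "n < 2"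
      by (cases "gdist V ?R p q") (auto simp: numeral_eq_enat)
    show False
    proof (cases n)
      case 0
      then have "gdist V ?R p q = enat 0" using n by simp
      then have "p = q" by (rule gdist_zero_eq)
      then show False using pq d0 by simp
    next
      case (Suc m)
      then have "n = 1" using n by simp
      then have "gdist V ?R p q = enat 1" using n by simp
      then have "?R p q" by (rule gdist_one_edge)
      then show False using Rd pq by simp
    qed
  qed
  also have "\<dots> \<le> gdiam V ?R" by (rule gdiam_upper[OF pq(1) pq(2)])
  finally have lower: "2 \<le> gdiam V ?R" .
  have far: "a \<noteq> b \<and> d a b \<noteq> 2 \<and> (\<forall>z\<in>V. \<not> (d a z = 2 \<and> d z b = 2))"
    if ab: "a \<in> V" "b \<in> V" "3 \<le> gdist V ?R a b" for a b
  proof (intro conjI ballI)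
    show "a \<noteq> b" using ab gdist_self[of a V ?R] by auto
    show "d a b \<noteq> 2"
    proof
      assume "d a b = 2"
      then have "gdist V ?R a b \<le> 1" using gdist_edge[where R="?R", OF ab(1,2)] Rd ab by simp
      then have "gdist V ?R a b \<le> enat 1" by (simp add: one_enat_def)
      with ab(3) have "(3::enat) \<le> enat 1" by (rule order_trans)
      then show False by (simp add: numeral_eq_enat)
    qed
    fix z assume z: "z \<in> V"
    show "\<not> (d a z = 2 \<and> d z b = 2)"
    proof
      assume "d a z = 2 \<and> d z b = 2"
      then have "gdist V ?R a b \<le> 2" using gd_path2[of ?R a z b V] Rd ab z by simp
      then show False using ab(3) enat_contra[of "gdist V ?R a b" 2 3] by (simp add: numeral_eq_enat)
    qed
  qed
  have upper_pair: "gdist V ?R x y \<le> 5" if xy: "x \<in> V" "y \<in> V" for x y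
  proof -
    have "gdist V ?R x y \<noteq> \<infinity>" using C xy unfolding gconnected_def by blast
    then obtain m where m: "gdist V ?R x y = enat m" by auto
    show ?thesis
    proof (rule ccontr)
      assume "\<not> ?thesis"
      then have m6: "6 \<le> m" using m by (simp add: numeral_eq_enat)
      obtain y6 where y6: "y6 \<in> V" "gdist V ?R x y6 \<le> enat 6" "gdist V ?R y6 y \<le> enat (m - 6)"
        using gdist_split[OF m m6] by blast
      have "enat m \<le> gdist V ?R x y6 + gdist V ?R y6 y" using gdist_tri[where V=V and R="?R" and x=x and y=y6 and z=y] m by simp
      then have g6: "gdist V ?R x y6 = enat 6" using y6(2,3) m6
        by (cases "gdist V ?R x y6"; cases "gdist V ?R y6 y") auto
      obtain y3 where y3: "y3 \<in> V" "gdist V ?R x y3 \<le> enat 3" "gdist V ?R y3 y6 \<le> enat (6 - 3)"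
        using gdist_split[OF g6, of 3] by auto
      have "enat 6 \<le> gdist V ?R x y3 + gdist V ?R y3 y6" using gdist_tri[where V=V and R="?R" and x=x and y=y3 and z=y6] g6 by simp
      then have g3: "3 \<le> gdist V ?R x y3" "3 \<le> gdist V ?R y3 y6" using y3(2,3)
        by (cases "gdist V ?R x y3"; cases "gdist V ?R y3 y6"; auto simp: numeral_eq_enat)+
      have f03: "x \<noteq> y3 \<and> d x y3 \<noteq> 2 \<and> (\<forall>z\<in>V. \<not> (d x z = 2 \<and> d z y3 = 2))" using far[OF xy(1) y3(1) g3(1)] .
      have f36: "y3 \<noteq> y6 \<and> d y3 y6 \<noteq> 2 \<and> (\<forall>z\<in>V. \<not> (d y3 z = 2 \<and> d z y6 = 2))" using far[OF y3(1) y6(1) g3(2)] .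
      have g6': "3 \<le> gdist V ?R x y6" using g6 by (simp add: numeral_eq_enat)
      have f06: "x \<noteq> y6 \<and> d x y6 \<noteq> 2 \<and> (\<forall>z\<in>V. \<not> (d x z = 2 \<and> d z y6 = 2))" using far[OF xy(1) y6(1) g6'] .
      have f06': "\<forall>z1\<in>V. \<forall>z2\<in>V. \<not> (d x z1 = 2 \<and> d z1 z2 = 2 \<and> d z2 y6 = 2)"
      proof (intro ballI notI)
        fix z1 z2 assume z: "z1 \<in> V" "z2 \<in> V" "d x z1 = 2 \<and> d z1 z2 = 2 \<and> d z2 y6 = 2"
        then have "gdist V ?R x y6 \<le> 3" using gd_path3[of ?R x z1 z2 y6 V] Rd xy y6 by simp
        then show False using g6 enat_contra[of "gdist V ?R x y6" 3 6] by (simp add: numeral_eq_enat)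
      qed
      from f03 have A1: "x \<noteq> y3" and A2: "d x y3 \<noteq> 2" and A3: "\<forall>z\<in>V. \<not> (d x z = 2 \<and> d z y3 = 2)" by auto
      from f36 have B1: "y3 \<noteq> y6" and B2: "d y3 y6 \<noteq> 2" and B3: "\<forall>z\<in>V. \<not> (d y3 z = 2 \<and> d z y6 = 2)" by auto
      from f06 have C1: "x \<noteq> y6" and C2: "d x y6 \<noteq> 2" and C3: "\<forall>z\<in>V. \<not> (d x z = 2 \<and> d z y6 = 2)" by auto
      show False by (rule MAIN[OF xy(1) y3(1) y6(1) A1 A2 A3 B1 B2 B3 C1 C2 C3 f06'])
    qed
  qed
  have "gdiam V ?R \<le> 5" unfolding gdiam_def using upper_pair by (intro SUP_least) auto
  then show ?thesis using lower by simp
qed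



lemma walk_lb:
  assumes mono: "\<And>u v. R u v \<Longrightarrow> f v \<le> f u + 1"
  shows "is_walk V R p x y \<Longrightarrow> f y \<le> f x + (length p - 1)"
proof (induction p arbitrary: x)
  case Nil then show ?case by (simp add: is_walk_def)
next
  case (Cons a p)
  show ?case
  proof (cases p)
    case Nil then show ?thesis using Cons.prems by (simp add: is_walk_single)
  next
    case (Cons b p')
    then have h: "a = x" "R a b" "is_walk V R (b # p') b y" using Cons.prems by (auto simp: is_walk_Cons2)
    have "f y \<le> f b + (length p - 1)" using Cons.IH[of b] h \<open>p = b # p'\<close> by simp
    moreover have "f b \<le> f a + 1" using mono h(2) .
    ultimately show ?thesis using h(1) \<open>p = b # p'\<close> by simp
  qed
qed

lemma gdist_eqI:
  assumes xV: "x \<in> V" and f0: "f x = 0" and f0': "\<forall>y\<in>V. f y = 0 \<longrightarrow> y = x"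
    and mono: "\<And>u v. R u v \<Longrightarrow> f v \<le> f u + 1"
    and pred: "\<forall>y\<in>V. 0 < f y \<longrightarrow> (\<exists>u\<in>V. R u y \<and> f y = Suc (f u))"
    and yV: "y \<in> V"
  shows "gdist V R x y = enat (f y)"
proof (rule antisym)
  have "\<forall>y. y \<in> V \<longrightarrow> f y = n \<longrightarrow> gdist V R x y \<le> enat n" for n
  proof (induction n)
    case 0 then show ?case using f0' gdist_self[OF xV] by (auto simp: zero_enat_def[symmetric])
  next
    case (Suc n)
    show ?case
    proof (intro allI impI)
      fix y assume y: "y \<in> V" "f y = Suc n"
      then obtain u where u: "u \<in> V" "R u y" "f y = Suc (f u)" using pred by auto
      have "gdist V R x y \<le> gdist V R x u + gdist V R u y" by (rule gdist_tri)
      also have "\<dots> \<le> enat n + 1" using Suc.IH u y gdist_edge[where R=R, OF u(1) y(1) u(2)] by (intro add_mono) auto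
      finally show "gdist V R x y \<le> enat (Suc n)" by (simp add: eSuc_enat[symmetric] eSuc_plus_1)
    qed
  qed
  then show "gdist V R x y \<le> enat (f y)" using yV by blast
next
  show "enat (f y) \<le> gdist V R x y"
    unfolding gdist_def
  proof (rule INF_greatest)
    fix p assume "p \<in> {p. is_walk V R p x y}"
    then have "f y \<le> f x + (length p - 1)" using walk_lb[of R f V p x y] mono by auto
    then show "enat (f y) \<le> enat (length p - 1)" using f0 by simp
  qed
qed

definition Es5 :: "(nat \<times> nat) list" where
  "Es5 = [(0,2),(0,3),(0,5),(1,2),(1,3),(1,4),(2,3),(3,5)]"
definition E5 :: "nat \<Rightarrow> nat \<Rightarrow> bool" where
  "E5 u v = ((u, v) \<in> set Es5 \<or> (v, u) \<in> set Es5)"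
definition V5 :: "nat set" where "V5 = {0,1,2,3,4,5}"
definition M5 :: "nat \<Rightarrow> nat \<Rightarrow> nat" where
  "M5 x y = [[0,2,1,1,3,1],[2,0,1,1,1,2],[1,1,0,1,2,2],[1,1,1,0,2,1],[3,1,2,2,0,3],[1,2,2,1,3,0]] ! x ! y"
definition N5 :: "nat \<Rightarrow> nat \<Rightarrow> nat" where
  "N5 x y = [[0,1,3,5,4,2],[1,0,2,4,3,1],[3,2,0,2,1,1],[5,4,2,0,1,3],[4,3,1,1,0,2],[2,1,1,3,2,0]] ! x ! y"

lemma E5_mono: "\<forall>x\<in>V5. \<forall>(u,v)\<in>set Es5. M5 x v \<le> M5 x u + 1 \<and> M5 x u \<le> M5 x v + 1"
  by (simp add: V5_def Es5_def M5_def)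

lemma E5_pred: "\<forall>x\<in>V5. \<forall>y\<in>V5. 0 < M5 x y \<longrightarrow> (\<exists>u\<in>V5. E5 u y \<and> M5 x y = Suc (M5 x u))"
  by (simp add: V5_def Es5_def M5_def E5_def)

lemma all_dist:
  assumes a: "\<forall>x\<in>V. M x x = 0 \<and> (\<forall>y\<in>V. M x y = 0 \<longrightarrow> y = x)"
    and b: "\<forall>x\<in>V. \<forall>u v. R u v \<longrightarrow> M x v \<le> M x u + 1"
    and c: "\<forall>x\<in>V. \<forall>y\<in>V. 0 < M x y \<longrightarrow> (\<exists>u\<in>V. R u y \<and> M x y = Suc (M x u))"
  shows "\<forall>x\<in>V. \<forall>y\<in>V. gdist V R x y = enat (M x y)"
proof (intro ballI)
  fix x y assume x: "x \<in> V" and y: "y \<in> V"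
  show "gdist V R x y = enat (M x y)"
    by (rule gdist_eqI[OF x, of "M x"]) (use a b c x y in auto)
qed

lemma gdiam_eq:
  assumes d: "\<forall>x\<in>V. \<forall>y\<in>V. gdist V R x y = enat (M x y)"
    and le: "\<forall>x\<in>V. \<forall>y\<in>V. M x y \<le> k" and ab: "a \<in> V" "b \<in> V" "M a b = k"
  shows "gdiam V R = enat k"
proof (rule antisym)
  show "gdiam V R \<le> enat k" unfolding gdiam_def using d le by (intro SUP_least) auto
  have "gdist V R a b \<le> gdiam V R" by (rule gdiam_upper[OF ab(1) ab(2)])
  then show "enat k \<le> gdiam V R" using d ab by simp
qed

lemma E5_sg: "simple_graph V5 E5"
  unfolding simple_graph_def E5_def V5_def Es5_def by auto

lemma E5_dist: "\<forall>x\<in>V5. \<forall>y\<in>V5. gdist V5 E5 x y = enat (M5 x y)"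
proof (rule all_dist)
  show "\<forall>x\<in>V5. M5 x x = 0 \<and> (\<forall>y\<in>V5. M5 x y = 0 \<longrightarrow> y = x)"
    by (simp add: V5_def M5_def)
  show "\<forall>x\<in>V5. \<forall>u v. E5 u v \<longrightarrow> M5 x v \<le> M5 x u + 1"
    using E5_mono unfolding E5_def by fastforce
  show "\<forall>x\<in>V5. \<forall>y\<in>V5. 0 < M5 x y \<longrightarrow> (\<exists>u\<in>V5. E5 u y \<and> M5 x y = Suc (M5 x u))"
    by (rule E5_pred)
qed

lemma D2_5: "D2 V5 E5 u v \<longleftrightarrow> u \<in> V5 \<and> v \<in> V5 \<and> M5 u v = 2"
  unfolding D2_def using E5_dist by (auto simp: numeral_eq_enat)

lemma N5_dist: "\<forall>x\<in>V5. \<forall>y\<in>V5. gdist V5 (D2 V5 E5) x y = enat (N5 x y)"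
proof (rule all_dist)
  show "\<forall>x\<in>V5. N5 x x = 0 \<and> (\<forall>y\<in>V5. N5 x y = 0 \<longrightarrow> y = x)"
    by (simp add: V5_def N5_def)
  have "\<forall>x\<in>V5. \<forall>u\<in>V5. \<forall>v\<in>V5. M5 u v = 2 \<longrightarrow> N5 x v \<le> N5 x u + 1"
    by (simp add: V5_def N5_def M5_def)
  then show "\<forall>x\<in>V5. \<forall>u v. D2 V5 E5 u v \<longrightarrow> N5 x v \<le> N5 x u + 1"
    unfolding D2_5 by blast
  have "\<forall>x\<in>V5. \<forall>y\<in>V5. 0 < N5 x y \<longrightarrow> (\<exists>u\<in>V5. M5 u y = 2 \<and> N5 x y = Suc (N5 x u))"
    by (simp add: V5_def N5_def M5_def)
  then show "\<forall>x\<in>V5. \<forall>y\<in>V5. 0 < N5 x y \<longrightarrow> (\<exists>u\<in>V5. D2 V5 E5 u y \<and> N5 x y = Suc (N5 x u))"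
    unfolding D2_5 by blast
qed

lemma example5: "simple_graph V5 E5 \<and> gdiam V5 E5 = 3 \<and> gconnected V5 (D2 V5 E5) \<and> gdiam V5 (D2 V5 E5) = 5"
proof (intro conjI)
  show "simple_graph V5 E5" by (rule E5_sg)
  have "gdiam V5 E5 = enat 3"
    by (rule gdiam_eq[OF E5_dist, of 3 0 4]) (simp_all add: V5_def M5_def)
  then show "gdiam V5 E5 = 3" by (simp add: numeral_eq_enat)
  have "gdiam V5 (D2 V5 E5) = enat 5"
    by (rule gdiam_eq[OF N5_dist, of 5 0 3]) (simp_all add: V5_def N5_def)
  then show "gdiam V5 (D2 V5 E5) = 5" by (simp add: numeral_eq_enat)
  show "gconnected V5 (D2 V5 E5)" unfolding gconnected_def using N5_dist by (auto simp: V5_def)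
qed



definition Es2 :: "(nat \<times> nat) list" where
  "Es2 = [(0,4),(0,5),(0,6),(1,2),(1,3),(1,6),(2,5),(3,4)]"
definition E2 :: "nat \<Rightarrow> nat \<Rightarrow> bool" where
  "E2 u v = ((u, v) \<in> set Es2 \<or> (v, u) \<in> set Es2)"
definition V2 :: "nat set" where "V2 = {0,1,2,3,4,5,6}"
definition M2 :: "nat \<Rightarrow> nat \<Rightarrow> nat" where
  "M2 x y = [[0,2,2,2,1,1,1],[2,0,1,1,2,2,1],[2,1,0,2,3,1,2],[2,1,2,0,1,3,2],[1,2,3,1,0,2,2],[1,2,1,3,2,0,2],[1,1,2,2,2,2,0]] ! x ! y"
definition N2 :: "nat \<Rightarrow> nat \<Rightarrow> nat" where
  "N2 x y = [[0,1,1,1,2,2,2],[1,0,2,2,1,1,2],[1,2,0,1,2,2,1],[1,2,1,0,2,2,1],[2,1,2,2,0,1,1],[2,1,2,2,1,0,1],[2,2,1,1,1,1,0]] ! x ! y"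

lemma E2_mono: "\<forall>x\<in>V2. \<forall>(u,v)\<in>set Es2. M2 x v \<le> M2 x u + 1 \<and> M2 x u \<le> M2 x v + 1"
  by (simp add: V2_def Es2_def M2_def)

lemma E2_pred: "\<forall>x\<in>V2. \<forall>y\<in>V2. 0 < M2 x y \<longrightarrow> (\<exists>u\<in>V2. E2 u y \<and> M2 x y = Suc (M2 x u))"
  by (simp add: V2_def Es2_def M2_def E2_def)

lemma E2_sg: "simple_graph V2 E2"
  unfolding simple_graph_def E2_def V2_def Es2_def by auto

lemma E2_dist: "\<forall>x\<in>V2. \<forall>y\<in>V2. gdist V2 E2 x y = enat (M2 x y)"
proof (rule all_dist)
  show "\<forall>x\<in>V2. M2 x x = 0 \<and> (\<forall>y\<in>V2. M2 x y = 0 \<longrightarrow> y = x)"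
    by (simp add: V2_def M2_def)
  show "\<forall>x\<in>V2. \<forall>u v. E2 u v \<longrightarrow> M2 x v \<le> M2 x u + 1"
    using E2_mono unfolding E2_def by fastforce
  show "\<forall>x\<in>V2. \<forall>y\<in>V2. 0 < M2 x y \<longrightarrow> (\<exists>u\<in>V2. E2 u y \<and> M2 x y = Suc (M2 x u))"
    by (rule E2_pred)
qed

lemma D2_2: "D2 V2 E2 u v \<longleftrightarrow> u \<in> V2 \<and> v \<in> V2 \<and> M2 u v = 2"
  unfolding D2_def using E2_dist by (auto simp: numeral_eq_enat)

lemma N2_dist: "\<forall>x\<in>V2. \<forall>y\<in>V2. gdist V2 (D2 V2 E2) x y = enat (N2 x y)"
proof (rule all_dist)
  show "\<forall>x\<in>V2. N2 x x = 0 \<and> (\<forall>y\<in>V2. N2 x y = 0 \<longrightarrow> y = x)"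
    by (simp add: V2_def N2_def)
  have "\<forall>x\<in>V2. \<forall>u\<in>V2. \<forall>v\<in>V2. M2 u v = 2 \<longrightarrow> N2 x v \<le> N2 x u + 1"
    by (simp add: V2_def N2_def M2_def)
  then show "\<forall>x\<in>V2. \<forall>u v. D2 V2 E2 u v \<longrightarrow> N2 x v \<le> N2 x u + 1"
    unfolding D2_2 by blast
  have "\<forall>x\<in>V2. \<forall>y\<in>V2. 0 < N2 x y \<longrightarrow> (\<exists>u\<in>V2. M2 u y = 2 \<and> N2 x y = Suc (N2 x u))"
    by (simp add: V2_def N2_def M2_def)
  then show "\<forall>x\<in>V2. \<forall>y\<in>V2. 0 < N2 x y \<longrightarrow> (\<exists>u\<in>V2. D2 V2 E2 u y \<and> N2 x y = Suc (N2 x u))"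
    unfolding D2_2 by blast
qed

lemma example2: "simple_graph V2 E2 \<and> gdiam V2 E2 = 3 \<and> gconnected V2 (D2 V2 E2) \<and> gdiam V2 (D2 V2 E2) = 2"
proof (intro conjI)
  show "simple_graph V2 E2" by (rule E2_sg)
  have "gdiam V2 E2 = enat 3"
    by (rule gdiam_eq[OF E2_dist, of 3 2 4]) (simp_all add: V2_def M2_def)
  then show "gdiam V2 E2 = 3" by (simp add: numeral_eq_enat)
  have "gdiam V2 (D2 V2 E2) = enat 2"
    by (rule gdiam_eq[OF N2_dist, of 2 0 4]) (simp_all add: V2_def N2_def)
  then show "gdiam V2 (D2 V2 E2) = 2" by (simp add: numeral_eq_enat)
  show "gconnected V2 (D2 V2 E2)" unfolding gconnected_def using N2_dist by (auto simp: V2_def)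
qed



theorem corollary2p9:
  shows "(\<forall>(V :: 'a set) E. simple_graph V E \<and> gdiam V E = 3 \<and> gconnected V (D2 V E)
            \<longrightarrow> 2 \<le> gdiam V (D2 V E) \<and> gdiam V (D2 V E) \<le> 5)
       \<and> (\<exists>(V :: nat set) E. simple_graph V E \<and> gdiam V E = 3 \<and> gconnected V (D2 V E)
            \<and> gdiam V (D2 V E) = 2)
       \<and> (\<exists>(V :: nat set) E. simple_graph V E \<and> gdiam V E = 3 \<and> gconnected V (D2 V E)
            \<and> gdiam V (D2 V E) = 5)"
proof (intro conjI)
  show "\<forall>(V :: 'a set) E. simple_graph V E \<and> gdiam V E = 3 \<and> gconnected V (D2 V E)
            \<longrightarrow> 2 \<le> gdiam V (D2 V E) \<and> gdiam V (D2 V E) \<le> 5"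
    using part1 by blast
  show "\<exists>(V :: nat set) E. simple_graph V E \<and> gdiam V E = 3 \<and> gconnected V (D2 V E)
            \<and> gdiam V (D2 V E) = 2"
    using example2 by blast
  show "\<exists>(V :: nat set) E. simple_graph V E \<and> gdiam V E = 3 \<and> gconnected V (D2 V E)
            \<and> gdiam V (D2 V E) = 5"
    using example5 by blast
qed

end
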